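(* Let $X\in\mathbb{R}^{n\times m}$ be a random matrix with independent centered entries satisfying $\mathbb{E}e^{\lambda X_{ij}}\le e^{\sigma^2(e^{|\lambda|}-1-|\lambda|)}$ for all $\lambda\in\mathbb{R}$, where $\sigma^2>0$. For nonempty $S\subset[n]$, $T\subset[m]$ let $$X_{S,T}=\max_{u\in\{\pm1\}^S}\max_{v\in\{\pm1\}^T}\sum_{i\in S}\sum_{j\in T}u_iX_{ij}v_j,\qquad \tau_{k,\ell}=k\log\frac{2en}{k}+\ell\log\frac{2em}{\ell},$$ and let $\beta(t,s)=e^{-s}\big(\frac{es}{s+t}\big)^{s+t}$ for $t\ge 0$, $s>0$. Then for any $t\ge1$, $$\Pr\Big(\bigcup_{S,T}\big\{-\log\beta(X_{S,T},|S||T|\sigma^2)\ge(1+t)\tau_{|S|,|T|}\big\}\Big)\le(e^2nm)^{-t},$$ where the union is over nonempty $S\subset[n]$ and $T\subset[m]$.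
   Context: $[n]=\{1,\dots,n\}$. (When $X_{S,T}<0$ the event $\{-\log\beta(X_{S,T},\cdot)\ge\cdot\}$ is understood with $\beta$ given by the same formula.) *)

theory Defs
  imports "HOL-Probability.Probability"
begin

definition XST :: "(nat \<Rightarrow> nat \<Rightarrow> real) \<Rightarrow> nat set \<Rightarrow> nat set \<Rightarrow> real" where
  "XST A S T = Max {(\<Sum>i\<in>S. \<Sum>j\<in>T. u i * A i j * v j) | u v.
       u \<in> S \<rightarrow>\<^sub>E {-1, 1} \<and> v \<in> T \<rightarrow>\<^sub>E {-1, 1}}"

definition tau :: "nat \<Rightarrow> nat \<Rightarrow> nat \<Rightarrow> nat \<Rightarrow> real" where
  "tau n m k l = real k * ln (2 * exp 1 * real n / real k) + real l * ln (2 * exp 1 * real m / real l)"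

definition beta :: "real \<Rightarrow> real \<Rightarrow> real" where
  "beta t s = exp (- s) * (exp 1 * s / (s + t)) powr (s + t)"

end

theory Submission
  imports Defs "HOL-Probability.Probability"
begin


lemma pow_div_fact_le_exp:
  fixes x :: real assumes "0 \<le> x"
  shows "x ^ k / fact k \<le> exp x"
proof -
  have s: "(\<lambda>n. x^n /\<^sub>R fact n) sums exp x" by (rule exp_converges)
  have "sum (\<lambda>n. x^n /\<^sub>R fact n) {k} \<le> suminf (\<lambda>n. x^n /\<^sub>R fact n)"
    by (rule sum_le_suminf) (use s assms in \<open>auto simp: sums_iff\<close>)
  then show ?thesis using s by (simp add: sums_iff divide_inverse mult.commute)
qed

lemma binom_bound:
  assumes "1 \<le> k" "k \<le> n"
  shows "real (n choose k) * (real k / real n) ^ k \<le> exp 1 ^ k"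
proof -
  have "real (n choose k) * fact k \<le> real n ^ k"
    using binomial_fact_pow[of n k] by (metis of_nat_fact of_nat_le_iff of_nat_mult of_nat_power)
  hence c: "real (n choose k) \<le> real n ^ k / fact k" by (simp add: field_simps)
  have "real (n choose k) * (real k / real n) ^ k \<le> real n ^ k / fact k * (real k / real n) ^ k"
    by (rule mult_right_mono[OF c]) simp
  also have "\<dots> = real k ^ k / fact k" using assms by (simp add: power_divide)
  also have "\<dots> \<le> exp (real k)" by (rule pow_div_fact_le_exp) simp
  also have "\<dots> = exp 1 ^ k" by (simp add: exp_of_nat_mult[symmetric])
  finally show ?thesis .
qed

lemma aux1:
  assumes "1 \<le> k" "k \<le> n"
  shows "(real k / (exp 1 * real n)) ^ k \<le> 1 / (exp 1 * real n)"
proof -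
  have n: "real n \<ge> 1" using assms by simp
  have q0: "0 \<le> real k / (exp 1 * real n)" by simp
  have q1: "real k / (exp 1 * real n) \<le> exp (-1)"
    using assms n by (simp add: field_simps exp_minus)
  have "(real k / (exp 1 * real n)) ^ k = (real k / (exp 1 * real n)) * (real k / (exp 1 * real n)) ^ (k - 1)"
    using assms by (metis Suc_diff_le diff_Suc_1 power_Suc)
  also have "\<dots> \<le> (real k / (exp 1 * real n)) * exp (-1) ^ (k - 1)"
    by (intro mult_left_mono power_mono q0 q1)
  also have "\<dots> = real k * exp (- real (k - 1)) / (exp 1 * real n)"
    by (simp add: exp_of_nat_mult[symmetric])
  also have "\<dots> \<le> 1 / (exp 1 * real n)"
  proof -
    have "1 + real (k - 1) \<le> exp (real (k - 1))" by (rule exp_ge_add_one_self)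
    hence "real k \<le> exp (real (k - 1))" using assms by simp
    hence "real k * exp (- real (k - 1)) \<le> 1" by (simp add: exp_minus field_simps)
    thus ?thesis using n by (intro divide_right_mono) auto
  qed
  finally show ?thesis .
qed

lemma per_k:
  fixes t :: real
  assumes "1 \<le> k" "k \<le> n" "t \<ge> 1"
  shows "real (n choose k) * 2 ^ k * exp (- (1 + t) * (real k * ln (2 * exp 1 * real n / real k)))
     \<le> (exp 1 * real n) powr (- t) * (1/2) ^ k"
proof -
  have n: "real n \<ge> 1" "real k \<ge> 1" using assms by auto
  define E where "E = (real k / (2 * exp 1 * real n)) ^ k"
  have E0: "E > 0" unfolding E_def using n by simp
  have lnE: "exp (- (real k * ln (2 * exp 1 * real n / real k))) = E"
  proof -
    have eq: "- (real k * ln (2 * exp 1 * real n / real k)) = real k * ln (real k / (2 * exp 1 * real n))"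
      using n by (simp add: ln_div algebra_simps)
    have "exp (- (real k * ln (2 * exp 1 * real n / real k))) = exp (real k * ln (real k / (2 * exp 1 * real n)))"
      by (simp only: eq)
    also have "\<dots> = exp (ln (real k / (2 * exp 1 * real n))) ^ k" by (rule exp_of_nat_mult)
    also have "\<dots> = E" unfolding E_def using n by simp
    finally show ?thesis .
  qed
  have split: "exp (- (1 + t) * (real k * ln (2 * exp 1 * real n / real k))) = E * E powr t"
  proof -
    define a where "a = real k * ln (2 * exp 1 * real n / real k)"
    have la: "- a = ln E" using lnE unfolding a_def by (metis ln_exp)
    have "- (1 + t) * a = - a + t * (- a)" by (simp add: algebra_simps)
    hence "exp (- (1 + t) * a) = exp (- a) * exp (t * (- a))" by (simp only: exp_add)
    also have "exp (t * (- a)) = E powr t" using E0 la by (simp add: powr_def)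
    finally show ?thesis using lnE unfolding a_def by simp
  qed
  have c1: "real (n choose k) * 2 ^ k * E \<le> 1"
  proof -
    have "real (n choose k) * 2 ^ k * E = real (n choose k) * (real k / real n) ^ k / exp 1 ^ k"
    proof -
      have "E = (real k / real n)^k / (2^k * exp 1 ^ k)" unfolding E_def by (simp add: power_divide power_mult_distrib)
      thus ?thesis by simp
    qed
    also have "\<dots> \<le> 1" using binom_bound[OF assms(1,2)] by simp
    finally show ?thesis .
  qed
  have Ele: "E \<le> 1 / (exp 1 * real n * 2 ^ k)"
  proof -
    have "E = (real k / (exp 1 * real n)) ^ k / 2 ^ k"
      unfolding E_def by (simp add: power_divide power_mult_distrib)
    also have "\<dots> \<le> (1 / (exp 1 * real n)) / 2 ^ k"
      by (intro divide_right_mono aux1 assms) simp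
    finally show ?thesis by simp
  qed
  have "E powr t \<le> (1 / (exp 1 * real n * 2 ^ k)) powr t"
    using E0 Ele assms by (intro powr_mono2) auto
  also have "\<dots> = (exp 1 * real n) powr (-t) * (2 ^ k) powr (-t)"
    by (simp add: powr_minus_divide powr_mult powr_divide)
  also have "\<dots> \<le> (exp 1 * real n) powr (-t) * (2 ^ k) powr (-1)"
    using assms n by (intro mult_left_mono powr_mono) auto
  also have "(2 ^ k :: real) powr (-1) = (1/2) ^ k"
    by (simp add: powr_minus_divide power_one_over)
  finally have Et: "E powr t \<le> (exp 1 * real n) powr (-t) * (1/2) ^ k" .
  have "real (n choose k) * 2 ^ k * exp (- (1 + t) * (real k * ln (2 * exp 1 * real n / real k)))
      = (real (n choose k) * 2 ^ k * E) * E powr t" unfolding split by (simp only: mult.assoc)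
  also have "\<dots> \<le> 1 * ((exp 1 * real n) powr (-t) * (1/2) ^ k)"
    by (intro mult_mono c1 Et) auto
  finally show ?thesis by simp
qed

lemma half_sum: "(\<Sum>k=1..n. (1/2::real) ^ k) = 1 - (1/2) ^ n"
  by (induction n) (auto simp: sum.atLeast1_atMost_eq)

lemma dim_sum:
  fixes t :: real
  assumes "n \<ge> 1" "t \<ge> 1"
  shows "(\<Sum>S\<in>{S. S \<noteq> {} \<and> S \<subseteq> {1..n}}. 2 ^ card S * exp (- (1 + t) * (real (card S) * ln (2 * exp 1 * real n / real (card S)))))
     \<le> (exp 1 * real n) powr (- t)"
proof -
  define f where "f k = (2::real) ^ k * exp (- (1 + t) * (real k * ln (2 * exp 1 * real n / real k)))" for k
  define P where "P = {S. S \<noteq> {} \<and> S \<subseteq> {1..n}}"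
  have fP: "finite P" unfolding P_def by (rule finite_subset[of _ "Pow {1..n}"]) auto
  have img: "card ` P \<subseteq> {1..n}"
  proof
    fix k assume "k \<in> card ` P"
    then obtain S where S: "S \<in> P" "k = card S" by auto
    have fin: "finite S" using S unfolding P_def by (auto intro: finite_subset)
    have "card S \<ge> 1" using S fin unfolding P_def by (simp add: Suc_le_eq card_gt_0_iff)
    moreover have "card S \<le> n" using S unfolding P_def by (metis (mono_tags) card_atLeastAtMost card_mono diff_Suc_1 finite_atLeastAtMost mem_Collect_eq)
    ultimately show "k \<in> {1..n}" using S by auto
  qed
  have "(\<Sum>S\<in>P. f (card S)) = (\<Sum>k=1..n. \<Sum>S\<in>{S. S \<in> P \<and> card S = k}. f (card S))"
    by (rule sum.group[symmetric, OF fP _ img]) simp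
  also have "\<dots> = (\<Sum>k=1..n. real (n choose k) * f k)"
  proof (rule sum.cong[OF refl])
    fix k assume k: "k \<in> {1..n}"
    have "{S. S \<in> P \<and> card S = k} = {B. B \<subseteq> {1..n} \<and> card B = k}"
      using k unfolding P_def by auto
    hence "card {S. S \<in> P \<and> card S = k} = n choose k" using n_subsets[of "{1..n}" k] by simp
    moreover have "(\<Sum>S\<in>{S. S \<in> P \<and> card S = k}. f (card S)) = (\<Sum>S\<in>{S. S \<in> P \<and> card S = k}. f k)"
      by (rule sum.cong) auto
    ultimately show "(\<Sum>S\<in>{S. S \<in> P \<and> card S = k}. f (card S)) = real (n choose k) * f k" by simp
  qed
  also have "\<dots> \<le> (\<Sum>k=1..n. (exp 1 * real n) powr (- t) * (1/2) ^ k)"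
    by (rule sum_mono) (use per_k assms in \<open>auto simp: f_def mult.assoc\<close>)
  also have "\<dots> = (exp 1 * real n) powr (- t) * (1 - (1/2) ^ n)"
    by (simp only: sum_distrib_left[symmetric] half_sum)
  also have "\<dots> \<le> (exp 1 * real n) powr (- t)"
    by (intro mult_left_le) auto
  finally show ?thesis unfolding f_def P_def .
qed



lemma beta_eq:
  assumes "s > 0" "x \<ge> 0"
  shows "beta x s = exp (x - (s + x) * ln (1 + x / s))"
proof -
  have sx: "s + x > 0" using assms by simp
  have l: "ln (1 + x / s) = ln (s + x) - ln s"
  proof -
    have "1 + x / s = (s + x) / s" using assms by (simp add: field_simps)
    thus ?thesis using assms sx by (simp add: ln_div)
  qed
  have "ln (exp 1 * s / (s + x)) = 1 + ln s - ln (s + x)"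
    using assms sx by (simp add: ln_div ln_mult)
  hence "(exp 1 * s / (s + x)) powr (s + x) = exp ((s + x) * (1 + ln s - ln (s + x)))"
    using assms sx by (simp add: powr_def mult.commute)
  hence "beta x s = exp (- s) * exp ((s + x) * (1 + ln s - ln (s + x)))"
    unfolding beta_def by simp
  also have "\<dots> = exp (- s + (s + x) * (1 + ln s - ln (s + x)))" by (rule exp_add[symmetric])
  also have "- s + (s + x) * (1 + ln s - ln (s + x)) = x - (s + x) * ln (1 + x / s)"
    unfolding l by (simp add: algebra_simps)
  finally show ?thesis .
qed

lemma chernoff_sum:
  fixes M :: "'a measure" and X :: "'a \<Rightarrow> nat \<Rightarrow> nat \<Rightarrow> real"
  assumes "prob_space M" "\<sigma>2 > 0"
    and indep: "prob_space.indep_vars M (\<lambda>_. borel) (\<lambda>p \<omega>. X \<omega> (fst p) (snd p)) ({1..n} \<times> {1..m})"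
    and mgf_int: "\<And>i j l. i \<in> {1..n} \<Longrightarrow> j \<in> {1..m} \<Longrightarrow> integrable M (\<lambda>\<omega>. exp (l * X \<omega> i j))"
    and mgf: "\<And>i j l. i \<in> {1..n} \<Longrightarrow> j \<in> {1..m} \<Longrightarrow>
       (\<integral>\<omega>. exp (l * X \<omega> i j) \<partial>M) \<le> exp (\<sigma>2 * (exp \<bar>l\<bar> - 1 - \<bar>l\<bar>))"
    and ST: "S \<subseteq> {1..n}" "T \<subseteq> {1..m}" "S \<noteq> {}" "T \<noteq> {}"
    and uv: "u \<in> S \<rightarrow>\<^sub>E {-1, 1}" "v \<in> T \<rightarrow>\<^sub>E {-1, 1}" and x: "x \<ge> 0"
  shows "measure M {\<omega>\<in>space M. x \<le> (\<Sum>i\<in>S. \<Sum>j\<in>T. u i * X \<omega> i j * v j)}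
     \<le> beta x (real (card S) * real (card T) * \<sigma>2)"
proof -
  interpret prob_space M by fact
  have finS: "finite S" and finT: "finite T" using ST by (auto intro: finite_subset)
  define s where "s = real (card S) * real (card T) * \<sigma>2"
  have s0: "s > 0" unfolding s_def using ST finS finT assms(2) by (simp add: card_gt_0_iff)
  define lam where "lam = ln (1 + x / s)"
  have lam0: "lam \<ge> 0" unfolding lam_def using s0 x by simp
  have elam: "exp lam = 1 + x / s" unfolding lam_def using s0 x by (simp add: add_pos_nonneg)
  define c where "c p = u (fst p) * v (snd p)" for p
  have c: "\<bar>c p\<bar> = 1" if "p \<in> S \<times> T" for p
  proof -
    have "u (fst p) \<in> {-1, 1}" "v (snd p) \<in> {-1, 1}" using that uv by (auto simp: PiE_iff)
    thus ?thesis unfolding c_def by (auto simp: abs_mult)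
  qed
  define Z where "Z p \<omega> = exp (lam * c p * X \<omega> (fst p) (snd p))" for p \<omega>
  define Y where "Y \<omega> = (\<Sum>i\<in>S. \<Sum>j\<in>T. u i * X \<omega> i j * v j)" for \<omega>
  have Yeq: "exp (lam * Y \<omega>) = (\<Prod>p\<in>S \<times> T. Z p \<omega>)" for \<omega>
  proof -
    have "lam * Y \<omega> = (\<Sum>p\<in>S \<times> T. lam * c p * X \<omega> (fst p) (snd p))"
      unfolding Y_def c_def sum_distrib_left sum.cartesian_product
      by (rule sum.cong) (auto simp: algebra_simps)
    thus ?thesis unfolding Z_def by (simp add: exp_sum finS finT)
  qed
  have STsub: "S \<times> T \<subseteq> {1..n} \<times> {1..m}" using ST by auto
  have indZ: "indep_vars (\<lambda>_. borel) Z (S \<times> T)"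
  proof -
    have "indep_vars (\<lambda>_. borel) (\<lambda>p \<omega>. X \<omega> (fst p) (snd p)) (S \<times> T)"
      by (rule indep_vars_subset[OF indep STsub])
    hence "indep_vars (\<lambda>_. borel) (\<lambda>p \<omega>. (\<lambda>z. exp (lam * c p * z)) (X \<omega> (fst p) (snd p))) (S \<times> T)"
      by (rule indep_vars_compose2) measurable
    thus ?thesis unfolding Z_def by simp
  qed
  have intZ: "integrable M (Z p)" if "p \<in> S \<times> T" for p
    using that STsub mgf_int[of "fst p" "snd p" "lam * c p"] unfolding Z_def by (auto simp: mem_Times_iff)
  have fin: "finite (S \<times> T)" using finS finT by simp
  have intY: "integrable M (\<lambda>\<omega>. exp (lam * Y \<omega>))"
    unfolding Yeq by (rule indep_vars_integrable[OF fin indZ intZ])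
  have intYeq: "(\<integral>\<omega>. exp (lam * Y \<omega>) \<partial>M) = (\<Prod>p\<in>S \<times> T. \<integral>\<omega>. Z p \<omega> \<partial>M)"
    unfolding Yeq by (rule indep_vars_lebesgue_integral[OF fin indZ intZ])
  also have "\<dots> \<le> (\<Prod>p\<in>S \<times> T. exp (\<sigma>2 * (exp lam - 1 - lam)))"
  proof (rule prod_mono)
    fix p assume p: "p \<in> S \<times> T"
    have "\<bar>lam * c p\<bar> = lam" using c[OF p] lam0 by (simp add: abs_mult)
    hence "(\<integral>\<omega>. Z p \<omega> \<partial>M) \<le> exp (\<sigma>2 * (exp lam - 1 - lam))"
      using mgf[of "fst p" "snd p" "lam * c p"] p STsub unfolding Z_def by (auto simp: mem_Times_iff)
    moreover have "0 \<le> (\<integral>\<omega>. Z p \<omega> \<partial>M)" unfolding Z_def by simp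
    ultimately show "0 \<le> (\<integral>\<omega>. Z p \<omega> \<partial>M) \<and> (\<integral>\<omega>. Z p \<omega> \<partial>M) \<le> exp (\<sigma>2 * (exp lam - 1 - lam))" by simp
  qed
  also have "\<dots> = exp (s * (exp lam - 1 - lam))"
    unfolding s_def using finS finT by (simp add: card_cartesian_product exp_of_nat_mult[symmetric] mult.assoc)
  finally have intle: "(\<integral>\<omega>. exp (lam * Y \<omega>) \<partial>M) \<le> exp (s * (exp lam - 1 - lam))" .
  have "{\<omega>\<in>space M. x \<le> Y \<omega>} \<subseteq> {\<omega>\<in>space M. exp (lam * x) \<le> exp (lam * Y \<omega>)}"
    using lam0 by (auto intro: mult_left_mono)
  hence "measure M {\<omega>\<in>space M. x \<le> Y \<omega>} \<le> measure M {\<omega>\<in>space M. exp (lam * x) \<le> exp (lam * Y \<omega>)}"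
  proof (rule finite_measure_mono)
    have "(\<lambda>\<omega>. exp (lam * Y \<omega>)) \<in> borel_measurable M" using intY by (rule borel_measurable_integrable)
    thus "{\<omega>\<in>space M. exp (lam * x) \<le> exp (lam * Y \<omega>)} \<in> sets M"
      unfolding borel_measurable_iff_ge by blast
  qed
  also have "\<dots> \<le> (\<integral>\<omega>. exp (lam * Y \<omega>) \<partial>M) / exp (lam * x)"
    by (rule integral_Markov_inequality_measure[OF intY]) auto
  also have "\<dots> \<le> exp (s * (exp lam - 1 - lam)) / exp (lam * x)"
    by (intro divide_right_mono intle) simp
  also have "\<dots> = exp (x - (s + x) * lam)"
    using s0 unfolding elam by (simp add: exp_diff[symmetric] field_simps)
  also have "\<dots> = beta x s" unfolding lam_def using beta_eq[OF s0 x] by simp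
  finally show ?thesis unfolding Y_def s_def .
qed



lemma XST_props:
  assumes "finite S" "finite T"
  shows "\<exists>u\<in>S \<rightarrow>\<^sub>E {-1, 1}. \<exists>v\<in>T \<rightarrow>\<^sub>E {-1, 1}. XST A S T = (\<Sum>i\<in>S. \<Sum>j\<in>T. u i * A i j * v j)"
    and "XST A S T \<ge> 0"
proof -
  define F where "F = {(\<Sum>i\<in>S. \<Sum>j\<in>T. u i * A i j * v j) | u v.
       u \<in> S \<rightarrow>\<^sub>E {-1::real, 1} \<and> v \<in> T \<rightarrow>\<^sub>E {-1::real, 1}}"
  have F: "F = (\<lambda>(u, v). (\<Sum>i\<in>S. \<Sum>j\<in>T. u i * A i j * v j)) ` ((S \<rightarrow>\<^sub>E {-1, 1}) \<times> (T \<rightarrow>\<^sub>E {-1, 1}))"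
    unfolding F_def by auto
  have finF: "finite F" unfolding F using assms by (auto intro!: finite_PiE)
  define u1 where "u1 = (\<lambda>i\<in>S. (1::real))"
  define u2 where "u2 = (\<lambda>i\<in>S. (-1::real))"
  define v1 where "v1 = (\<lambda>i\<in>T. (1::real))"
  have m1: "(\<Sum>i\<in>S. \<Sum>j\<in>T. u1 i * A i j * v1 j) \<in> F" unfolding F_def u1_def v1_def by fastforce
  have m2: "(\<Sum>i\<in>S. \<Sum>j\<in>T. u2 i * A i j * v1 j) \<in> F" unfolding F_def u2_def v1_def by fastforce
  have neg: "(\<Sum>i\<in>S. \<Sum>j\<in>T. u2 i * A i j * v1 j) = - (\<Sum>i\<in>S. \<Sum>j\<in>T. u1 i * A i j * v1 j)"
    unfolding u1_def u2_def by (simp add: sum_negf[symmetric])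
  have X: "XST A S T = Max F" unfolding XST_def F_def by simp
  have "F \<noteq> {}" using m1 by auto
  hence "Max F \<in> F" using finF by (rule Max_in[rotated])
  thus "\<exists>u\<in>S \<rightarrow>\<^sub>E {-1, 1}. \<exists>v\<in>T \<rightarrow>\<^sub>E {-1, 1}. XST A S T = (\<Sum>i\<in>S. \<Sum>j\<in>T. u i * A i j * v j)"
    unfolding X F_def by blast
  have "(\<Sum>i\<in>S. \<Sum>j\<in>T. u1 i * A i j * v1 j) \<le> Max F" "(\<Sum>i\<in>S. \<Sum>j\<in>T. u2 i * A i j * v1 j) \<le> Max F"
    using finF m1 m2 by auto
  thus "XST A S T \<ge> 0" unfolding X neg by linarith
qed

theorem lemmaB1:
  fixes M :: "'a measure" and X :: "'a \<Rightarrow> nat \<Rightarrow> nat \<Rightarrow> real"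
    and n m :: nat and \<sigma>2 t :: real
  assumes "prob_space M"
    and "n \<ge> 1" and "m \<ge> 1"
    and "\<sigma>2 > 0"
    and indep: "prob_space.indep_vars M (\<lambda>_. borel) (\<lambda>p \<omega>. X \<omega> (fst p) (snd p)) ({1..n} \<times> {1..m})"
    and integ: "\<And>i j. i \<in> {1..n} \<Longrightarrow> j \<in> {1..m} \<Longrightarrow> integrable M (\<lambda>\<omega>. X \<omega> i j)"
    and centered: "\<And>i j. i \<in> {1..n} \<Longrightarrow> j \<in> {1..m} \<Longrightarrow> (\<integral>\<omega>. X \<omega> i j \<partial>M) = 0"
    and mgf_int: "\<And>i j l. i \<in> {1..n} \<Longrightarrow> j \<in> {1..m} \<Longrightarrow> integrable M (\<lambda>\<omega>. exp (l * X \<omega> i j))"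
    and mgf: "\<And>i j l. i \<in> {1..n} \<Longrightarrow> j \<in> {1..m} \<Longrightarrow>
       (\<integral>\<omega>. exp (l * X \<omega> i j) \<partial>M) \<le> exp (\<sigma>2 * (exp \<bar>l\<bar> - 1 - \<bar>l\<bar>))"
    and "t \<ge> 1"
  shows "measure M {\<omega> \<in> space M. \<exists>S T. S \<noteq> {} \<and> S \<subseteq> {1..n} \<and> T \<noteq> {} \<and> T \<subseteq> {1..m} \<and>
            - ln (beta (XST (X \<omega>) S T) (real (card S) * real (card T) * \<sigma>2))
              \<ge> (1 + t) * tau n m (card S) (card T)}
         \<le> (exp 2 * real n * real m) powr (- t)"
proof -
  interpret prob_space M by fact
  define P where "P = {S. S \<noteq> {} \<and> S \<subseteq> {1..n}}"
  define Q where "Q = {T. T \<noteq> {} \<and> T \<subseteq> {1..m}}"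
  have fP: "finite P" unfolding P_def by (rule finite_subset[of _ "Pow {1..n}"]) auto
  have fQ: "finite Q" unfolding Q_def by (rule finite_subset[of _ "Pow {1..m}"]) auto
  have finPS: "finite S" "S \<noteq> {}" "S \<subseteq> {1..n}" if "S \<in> P" for S
    using that unfolding P_def by (auto intro: finite_subset)
  have finQT: "finite T" "T \<noteq> {}" "T \<subseteq> {1..m}" if "T \<in> Q" for T
    using that unfolding Q_def by (auto intro: finite_subset)
  define s where "s S T = real (card S) * real (card T) * \<sigma>2" for S T :: "nat set"
  have s0: "s S T > 0" if "S \<in> P" "T \<in> Q" for S T
    using finPS[OF that(1)] finQT[OF that(2)] assms(4) unfolding s_def by (simp add: card_gt_0_iff)
  define c where "c S T = (1 + t) * tau n m (card S) (card T)" for S T :: "nat set"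
  define g where "g S T x = (s S T + x) * ln (1 + x / s S T) - x" for S T x
  have gb: "- ln (beta x (s S T)) = g S T x" if "S \<in> P" "T \<in> Q" "x \<ge> 0" for S T x
    using beta_eq[OF s0[OF that(1,2)] that(3)] unfolding g_def by simp
  define A where "A S T = {x \<in> {0..}. c S T \<le> g S T x}" for S T :: "nat set"
  define xs where "xs S T = Inf (A S T)" for S T :: "nat set"
  have xsA: "xs S T \<in> A S T" if "S \<in> P" "T \<in> Q" "A S T \<noteq> {}" for S T
  proof -
    have "continuous_on {0..} (g S T)"
    proof -
      have "1 + x / s S T \<noteq> 0" if "x \<in> {0..}" for x
        using s0[OF \<open>S \<in> P\<close> \<open>T \<in> Q\<close>] that by (smt (verit) atLeast_iff divide_nonneg_pos)
      thus ?thesis unfolding g_def using s0[OF \<open>S \<in> P\<close> \<open>T \<in> Q\<close>] by (intro continuous_intros) auto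
    qed
    hence "closed (A S T)" unfolding A_def
      by (intro continuous_on_closed_Collect_le continuous_intros) auto
    moreover have "bdd_below (A S T)" unfolding A_def by (rule bdd_belowI[of _ 0]) auto
    ultimately show ?thesis unfolding xs_def using that(3) closed_contains_Inf by blast
  qed
  define Y where "Y S T u v \<omega> = (\<Sum>i\<in>S. \<Sum>j\<in>T. u i * X \<omega> i j * v j)" for S T :: "nat set" and u v :: "nat \<Rightarrow> real" and \<omega>
  define B where "B S T u v = (if A S T = {} then {} else {\<omega>\<in>space M. xs S T \<le> Y S T u v \<omega>})" for S T :: "nat set" and u v :: "nat \<Rightarrow> real"
  define U where "U = (\<Union>S\<in>P. \<Union>T\<in>Q. \<Union>u\<in>S \<rightarrow>\<^sub>E {-1::real, 1}. \<Union>v\<in>T \<rightarrow>\<^sub>E {-1::real, 1}. B S T u v)"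
  have sub: "{\<omega> \<in> space M. \<exists>S T. S \<noteq> {} \<and> S \<subseteq> {1..n} \<and> T \<noteq> {} \<and> T \<subseteq> {1..m} \<and>
            - ln (beta (XST (X \<omega>) S T) (real (card S) * real (card T) * \<sigma>2))
              \<ge> (1 + t) * tau n m (card S) (card T)} \<subseteq> U"
  proof
    fix \<omega> assume "\<omega> \<in> {\<omega> \<in> space M. \<exists>S T. S \<noteq> {} \<and> S \<subseteq> {1..n} \<and> T \<noteq> {} \<and> T \<subseteq> {1..m} \<and>
            - ln (beta (XST (X \<omega>) S T) (real (card S) * real (card T) * \<sigma>2))
              \<ge> (1 + t) * tau n m (card S) (card T)}"
    then obtain S T where w: "\<omega> \<in> space M" and SP: "S \<in> P" and TQ: "T \<in> Q"
      and ev: "- ln (beta (XST (X \<omega>) S T) (s S T)) \<ge> c S T"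
      unfolding P_def Q_def s_def c_def by blast
    obtain u v where u: "u \<in> S \<rightarrow>\<^sub>E {-1, 1}" and v: "v \<in> T \<rightarrow>\<^sub>E {-1, 1}"
      and eq: "XST (X \<omega>) S T = Y S T u v \<omega>"
      using XST_props(1)[OF finPS(1)[OF SP] finQT(1)[OF TQ], of "X \<omega>"] unfolding Y_def by blast
    have nn: "XST (X \<omega>) S T \<ge> 0" by (rule XST_props(2)[OF finPS(1)[OF SP] finQT(1)[OF TQ]])
    have inA: "XST (X \<omega>) S T \<in> A S T" using ev gb[OF SP TQ nn] nn unfolding A_def by simp
    hence ne: "A S T \<noteq> {}" by auto
    have "xs S T \<le> XST (X \<omega>) S T" unfolding xs_def
      by (rule cInf_lower[OF inA]) (auto simp: A_def intro: bdd_belowI[of _ 0])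
    hence "\<omega> \<in> B S T u v" unfolding B_def using ne w eq by simp
    thus "\<omega> \<in> U" unfolding U_def using SP TQ u v by blast
  qed
  have measX: "(\<lambda>\<omega>. X \<omega> i j) \<in> borel_measurable M" if "i \<in> {1..n}" "j \<in> {1..m}" for i j
    using indep that unfolding indep_vars_def2 by auto
  have Bsets: "B S T u v \<in> sets M" if "S \<in> P" "T \<in> Q" for S T u v
  proof -
    have "Y S T u v \<in> borel_measurable M" unfolding Y_def
      using finPS(3)[OF that(1)] finQT(3)[OF that(2)]
      by (intro borel_measurable_sum borel_measurable_times borel_measurable_const measX) auto
    thus ?thesis unfolding B_def borel_measurable_iff_ge by auto
  qed
  have Bmeas: "measure M (B S T u v) \<le> exp (- c S T)"
    if "S \<in> P" "T \<in> Q" "u \<in> S \<rightarrow>\<^sub>E {-1, 1}" "v \<in> T \<rightarrow>\<^sub>E {-1, 1}" for S T u v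
  proof (cases "A S T = {}")
    case True thus ?thesis unfolding B_def by simp
  next
    case False
    have xa: "xs S T \<in> A S T" by (rule xsA[OF that(1,2) False])
    hence x0: "xs S T \<ge> 0" and cx: "c S T \<le> g S T (xs S T)" unfolding A_def by auto
    have "measure M (B S T u v) \<le> beta (xs S T) (s S T)"
      unfolding B_def Y_def s_def using False
      by (simp, intro chernoff_sum[OF assms(1) assms(4) indep mgf_int mgf] finPS[OF that(1)] finQT[OF that(2)] that x0)
    also have "beta (xs S T) (s S T) = exp (- g S T (xs S T))"
      using beta_eq[OF s0[OF that(1,2)] x0] unfolding g_def by simp
    also have "\<dots> \<le> exp (- c S T)" using cx by simp
    finally show ?thesis .
  qed
  have Usets: "(\<Union>v\<in>T \<rightarrow>\<^sub>E {-1::real, 1}. B S T u v) \<in> sets M" if "S \<in> P" "T \<in> Q" for S T u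
    by (rule sets.finite_UN) (use Bsets[OF that] finQT(1)[OF that(2)] in \<open>auto intro!: finite_PiE\<close>)
  have Usets2: "(\<Union>u\<in>S \<rightarrow>\<^sub>E {-1::real, 1}. \<Union>v\<in>T \<rightarrow>\<^sub>E {-1::real, 1}. B S T u v) \<in> sets M" if "S \<in> P" "T \<in> Q" for S T
    by (rule sets.finite_UN) (use Usets[OF that] finPS(1)[OF that(1)] in \<open>auto intro!: finite_PiE\<close>)
  have Usets3: "(\<Union>T\<in>Q. \<Union>u\<in>S \<rightarrow>\<^sub>E {-1::real, 1}. \<Union>v\<in>T \<rightarrow>\<^sub>E {-1::real, 1}. B S T u v) \<in> sets M" if "S \<in> P" for S
    by (rule sets.finite_UN) (use Usets2[OF that] fQ in auto)
  have USets: "U \<in> sets M" unfolding U_def by (rule sets.finite_UN) (use Usets3 fP in auto)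
  have cardPi: "card (S \<rightarrow>\<^sub>E {-1::real, 1}) = 2 ^ card S" if "finite S" for S :: "nat set"
    using that by (simp add: card_PiE numeral_2_eq_2)
  define e1 where "e1 N k = exp (- (1 + t) * (real k * ln (2 * exp 1 * real N / real k)))" for N k :: nat
  have ce: "exp (- c S T) = e1 n (card S) * e1 m (card T)" for S T
    unfolding c_def tau_def e1_def by (simp add: exp_add[symmetric] algebra_simps)
  have "measure M U \<le> (\<Sum>S\<in>P. measure M (\<Union>T\<in>Q. \<Union>u\<in>S \<rightarrow>\<^sub>E {-1::real, 1}. \<Union>v\<in>T \<rightarrow>\<^sub>E {-1::real, 1}. B S T u v))"
    unfolding U_def by (rule measure_UNION_le[OF fP Usets3])
  also have "\<dots> \<le> (\<Sum>S\<in>P. \<Sum>T\<in>Q. 2 ^ card S * 2 ^ card T * exp (- c S T))"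
  proof (rule sum_mono)
    fix S assume SP: "S \<in> P"
    have "measure M (\<Union>T\<in>Q. \<Union>u\<in>S \<rightarrow>\<^sub>E {-1::real, 1}. \<Union>v\<in>T \<rightarrow>\<^sub>E {-1::real, 1}. B S T u v)
       \<le> (\<Sum>T\<in>Q. measure M (\<Union>u\<in>S \<rightarrow>\<^sub>E {-1::real, 1}. \<Union>v\<in>T \<rightarrow>\<^sub>E {-1::real, 1}. B S T u v))"
      by (rule measure_UNION_le[OF fQ Usets2[OF SP]])
    also have "\<dots> \<le> (\<Sum>T\<in>Q. 2 ^ card S * 2 ^ card T * exp (- c S T))"
    proof (rule sum_mono)
      fix T assume TQ: "T \<in> Q"
      have "measure M (\<Union>u\<in>S \<rightarrow>\<^sub>E {-1::real, 1}. \<Union>v\<in>T \<rightarrow>\<^sub>E {-1::real, 1}. B S T u v)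
          \<le> (\<Sum>u\<in>S \<rightarrow>\<^sub>E {-1::real, 1}. measure M (\<Union>v\<in>T \<rightarrow>\<^sub>E {-1::real, 1}. B S T u v))"
        by (rule measure_UNION_le[OF _ Usets[OF SP TQ]]) (simp add: finite_PiE finPS(1)[OF SP])
      also have "\<dots> \<le> (\<Sum>u\<in>S \<rightarrow>\<^sub>E {-1::real, 1}. \<Sum>v\<in>T \<rightarrow>\<^sub>E {-1::real, 1}. exp (- c S T))"
      proof (rule sum_mono)
        fix u assume u: "u \<in> S \<rightarrow>\<^sub>E {-1::real, 1}"
        have "measure M (\<Union>v\<in>T \<rightarrow>\<^sub>E {-1::real, 1}. B S T u v) \<le> (\<Sum>v\<in>T \<rightarrow>\<^sub>E {-1::real, 1}. measure M (B S T u v))"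
          by (rule measure_UNION_le[OF _ Bsets[OF SP TQ]]) (simp add: finite_PiE finQT(1)[OF TQ])
        also have "\<dots> \<le> (\<Sum>v\<in>T \<rightarrow>\<^sub>E {-1::real, 1}. exp (- c S T))"
          by (rule sum_mono) (rule Bmeas[OF SP TQ u])
        finally show "measure M (\<Union>v\<in>T \<rightarrow>\<^sub>E {-1::real, 1}. B S T u v) \<le> (\<Sum>v\<in>T \<rightarrow>\<^sub>E {-1::real, 1}. exp (- c S T))" .
      qed
      also have "\<dots> = 2 ^ card S * 2 ^ card T * exp (- c S T)"
        using cardPi[OF finPS(1)[OF SP]] cardPi[OF finQT(1)[OF TQ]] by simp
      finally show "measure M (\<Union>u\<in>S \<rightarrow>\<^sub>E {-1::real, 1}. \<Union>v\<in>T \<rightarrow>\<^sub>E {-1::real, 1}. B S T u v)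
          \<le> 2 ^ card S * 2 ^ card T * exp (- c S T)" .
    qed
    finally show "measure M (\<Union>T\<in>Q. \<Union>u\<in>S \<rightarrow>\<^sub>E {-1::real, 1}. \<Union>v\<in>T \<rightarrow>\<^sub>E {-1::real, 1}. B S T u v)
       \<le> (\<Sum>T\<in>Q. 2 ^ card S * 2 ^ card T * exp (- c S T))" .
  qed
  also have "\<dots> = (\<Sum>S\<in>P. 2 ^ card S * e1 n (card S)) * (\<Sum>T\<in>Q. 2 ^ card T * e1 m (card T))"
    unfolding ce sum_product by (intro sum.cong refl) (simp add: algebra_simps)
  also have "\<dots> \<le> (exp 1 * real n) powr (- t) * (exp 1 * real m) powr (- t)"
    unfolding P_def Q_def e1_def
    by (intro mult_mono dim_sum assms sum_nonneg) auto
  also have "\<dots> = (exp 2 * real n * real m) powr (- t)"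
  proof -
    have "exp 2 * real n * real m = (exp 1 * real n) * (exp 1 * real m)"
      by (simp add: exp_add[symmetric] algebra_simps)
    show ?thesis unfolding \<open>exp 2 * real n * real m = (exp 1 * real n) * (exp 1 * real m)\<close>
      by (rule powr_mult[symmetric])
  qed
  finally have "measure M U \<le> (exp 2 * real n * real m) powr (- t)" .
  moreover have "measure M {\<omega> \<in> space M. \<exists>S T. S \<noteq> {} \<and> S \<subseteq> {1..n} \<and> T \<noteq> {} \<and> T \<subseteq> {1..m} \<and>
            - ln (beta (XST (X \<omega>) S T) (real (card S) * real (card T) * \<sigma>2))
              \<ge> (1 + t) * tau n m (card S) (card T)} \<le> measure M U"
    by (rule finite_measure_mono[OF sub USets])
  ultimately show ?thesis by linarith
qed

end
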